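(* For every nominal $\mathrm{Perm}$-set $X$, there is an isomorphism of nominal $\mathrm{Sb}$-sets $F(X^{( * )})\cong (F X)^*$.
   Context: Atoms $\mathbb{A}$ (countably infinite); $\mathrm{Sb}$ = monoid of finitely-non-identity functions $\mathbb{A}\to\mathbb{A}$; $\mathrm{Perm}$ its group of bijections. For $M\in\{\mathrm{Sb},\mathrm{Perm}\}$, a nominal $M$-set is an $M$-set in which every element $x$ has a finite support $C$ ($m_1|_C=m_2|_C\Rightarrow m_1x=m_2x$). Elements $x,y$ are separated ($x\perp y$) if they have disjoint supports; $X\otimes Y=\{(x,y)\mid x\perp y\}$. Separated powers: $X^{(0)}=1$, $X^{(n+1)}=X^{(n)}\otimes X$; $X^{( * )}=\coprod_n X^{(n)}$ (separated words). For a nominal $\mathrm{Sb}$-set $Z$, $Z^*=\coprod_n Z^n$ (all words) with pointwise action. $F(X)=(\mathrm{Sb}\times X)/{\sim}$, $\sim$ the least equivalence containing $(m,gx)\sim(mg,x)$ ($g\in\mathrm{Perm}$) and $(m,x)\sim(m',x)$ if $m|_C=m'|_C$ for a $\mathrm{Perm}$-support $C$ of $x$; action $n\cdot[m,x]=[nm,x]$. *)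

theory Defs
  imports Main
begin

text \<open>Atoms are modelled by the countably infinite type nat.\<close>

definition Sb :: "(nat \<Rightarrow> nat) set" where
  "Sb = {m. finite {a. m a \<noteq> a}}"

definition Perm :: "(nat \<Rightarrow> nat) set" where
  "Perm = {m \<in> Sb. bij m}"

definition supports :: "(nat \<Rightarrow> nat) set \<Rightarrow> ((nat \<Rightarrow> nat) \<Rightarrow> 'x \<Rightarrow> 'x) \<Rightarrow> nat set \<Rightarrow> 'x \<Rightarrow> bool" where
  "supports M act C x \<longleftrightarrow>
     (\<forall>m1\<in>M. \<forall>m2\<in>M. (\<forall>a\<in>C. m1 a = m2 a) \<longrightarrow> act m1 x = act m2 x)"

definition nominal_set :: "(nat \<Rightarrow> nat) set \<Rightarrow> 'x set \<Rightarrow> ((nat \<Rightarrow> nat) \<Rightarrow> 'x \<Rightarrow> 'x) \<Rightarrow> bool" where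
  "nominal_set M X act \<longleftrightarrow>
     (\<forall>m\<in>M. \<forall>x\<in>X. act m x \<in> X) \<and>
     (\<forall>x\<in>X. act id x = x) \<and>
     (\<forall>m1\<in>M. \<forall>m2\<in>M. \<forall>x\<in>X. act (m1 \<circ> m2) x = act m1 (act m2 x)) \<and>
     (\<forall>x\<in>X. \<exists>C. finite C \<and> supports M act C x)"

definition separated :: "(nat \<Rightarrow> nat) set \<Rightarrow> ((nat \<Rightarrow> nat) \<Rightarrow> 'x \<Rightarrow> 'x) \<Rightarrow> ((nat \<Rightarrow> nat) \<Rightarrow> 'y \<Rightarrow> 'y)
     \<Rightarrow> 'x \<Rightarrow> 'y \<Rightarrow> bool" where
  "separated M actx acty x y \<longleftrightarrow>
     (\<exists>C D. finite C \<and> finite D \<and> supports M actx C x \<and> supports M acty D y \<and> C \<inter> D = {})"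

definition word_act :: "((nat \<Rightarrow> nat) \<Rightarrow> 'x \<Rightarrow> 'x) \<Rightarrow> (nat \<Rightarrow> nat) \<Rightarrow> 'x list \<Rightarrow> 'x list" where
  "word_act act m w = map (act m) w"

text \<open>Separated words X^(*) of a nominal Perm-set: X^(0) = 1, X^(n+1) = X^(n) \<otimes> X.\<close>
inductive_set sep_words :: "'x set \<Rightarrow> ((nat \<Rightarrow> nat) \<Rightarrow> 'x \<Rightarrow> 'x) \<Rightarrow> 'x list set"
  for X act where
  Nil: "[] \<in> sep_words X act"
| snoc: "w \<in> sep_words X act \<Longrightarrow> x \<in> X \<Longrightarrow> separated Perm (word_act act) act w x
          \<Longrightarrow> w @ [x] \<in> sep_words X act"

text \<open>The free functor F from nominal Perm-sets to nominal Sb-sets.\<close>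
definition F_gen :: "'x set \<Rightarrow> ((nat \<Rightarrow> nat) \<Rightarrow> 'x \<Rightarrow> 'x) \<Rightarrow> (((nat \<Rightarrow> nat) \<times> 'x) \<times> ((nat \<Rightarrow> nat) \<times> 'x)) set" where
  "F_gen X act =
     {((m, act g x), (m \<circ> g, x)) | m g x. m \<in> Sb \<and> g \<in> Perm \<and> x \<in> X} \<union>
     {((m, x), (m', x)) | m m' x. m \<in> Sb \<and> m' \<in> Sb \<and> x \<in> X \<and>
        (\<exists>C. finite C \<and> supports Perm act C x \<and> (\<forall>a\<in>C. m a = m' a))}"

definition F_rel :: "'x set \<Rightarrow> ((nat \<Rightarrow> nat) \<Rightarrow> 'x \<Rightarrow> 'x) \<Rightarrow> (((nat \<Rightarrow> nat) \<times> 'x) \<times> ((nat \<Rightarrow> nat) \<times> 'x)) set" where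
  "F_rel X act = (Id_on (Sb \<times> X) \<union> F_gen X act \<union> (F_gen X act)\<inverse>)\<^sup>*"

definition F_carrier :: "'x set \<Rightarrow> ((nat \<Rightarrow> nat) \<Rightarrow> 'x \<Rightarrow> 'x) \<Rightarrow> ((nat \<Rightarrow> nat) \<times> 'x) set set" where
  "F_carrier X act = (Sb \<times> X) // F_rel X act"

definition F_act :: "'x set \<Rightarrow> ((nat \<Rightarrow> nat) \<Rightarrow> 'x \<Rightarrow> 'x) \<Rightarrow> (nat \<Rightarrow> nat)
     \<Rightarrow> ((nat \<Rightarrow> nat) \<times> 'x) set \<Rightarrow> ((nat \<Rightarrow> nat) \<times> 'x) set" where
  "F_act X act n c = (\<Union>(m, x)\<in>c. F_rel X act `` {(n \<circ> m, x)})"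

definition nom_iso :: "(nat \<Rightarrow> nat) set \<Rightarrow> 'a set \<Rightarrow> ((nat \<Rightarrow> nat) \<Rightarrow> 'a \<Rightarrow> 'a)
     \<Rightarrow> 'b set \<Rightarrow> ((nat \<Rightarrow> nat) \<Rightarrow> 'b \<Rightarrow> 'b) \<Rightarrow> ('a \<Rightarrow> 'b) \<Rightarrow> bool" where
  "nom_iso M A actA B actB f \<longleftrightarrow>
     bij_betw f A B \<and> (\<forall>m\<in>M. \<forall>x\<in>A. f (actA m x) = actB m (f x))"

end

theory Submission
  imports Defs
begin

definition sw :: "nat \<Rightarrow> nat \<Rightarrow> nat \<Rightarrow> nat" where
  "sw a b = id(a := b, b := a)"

lemma sw_simps: "sw a b a = b" "sw a b b = a" "c \<noteq> a \<Longrightarrow> c \<noteq> b \<Longrightarrow> sw a b c = c"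
  by (auto simp: sw_def)

lemma Perm_id: "id \<in> Perm"
  by (simp add: Perm_def Sb_def)

lemma Sb_id: "id \<in> Sb"
  by (simp add: Sb_def)

lemma Perm_Sb: "g \<in> Perm \<Longrightarrow> g \<in> Sb" by (simp add: Perm_def)
lemma Perm_bij: "g \<in> Perm \<Longrightarrow> bij g" by (simp add: Perm_def)

lemma Sb_comp: assumes "f \<in> Sb" "g \<in> Sb" shows "f \<circ> g \<in> Sb"
proof -
  have "{a. (f \<circ> g) a \<noteq> a} \<subseteq> {a. f a \<noteq> a} \<union> {a. g a \<noteq> a}" by auto
  then show ?thesis using assms unfolding Sb_def by (auto intro: finite_subset)
qed

lemma Perm_comp: assumes "f \<in> Perm" "g \<in> Perm" shows "f \<circ> g \<in> Perm"
  using assms Sb_comp bij_comp by (auto simp: Perm_def)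

lemma Perm_inv: assumes "g \<in> Perm" shows "inv g \<in> Perm"
proof -
  have b: "bij g" using assms by (simp add: Perm_def)
  have "{a. inv g a \<noteq> a} \<subseteq> {a. g a \<noteq> a}"
  proof
    fix a assume "a \<in> {a. inv g a \<noteq> a}"
    then have "inv g a \<noteq> a" by simp
    moreover have "g a = a \<Longrightarrow> inv g a = a" using b by (metis bij_is_inj inv_f_f)
    ultimately show "a \<in> {a. g a \<noteq> a}" by auto
  qed
  then show ?thesis using assms b by (auto simp: Perm_def Sb_def intro: finite_subset bij_imp_bij_inv)
qed

lemma Perm_inv_cancel: "g \<in> Perm \<Longrightarrow> g (inv g a) = a" "g \<in> Perm \<Longrightarrow> inv g (g a) = a"
  by (auto simp: Perm_def bij_def surj_f_inv_f inv_f_f)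

lemma Perm_inv_comp: "g \<in> Perm \<Longrightarrow> inv g \<circ> g = id" "g \<in> Perm \<Longrightarrow> g \<circ> inv g = id"
  by (auto simp: Perm_inv_cancel)

lemma Perm_inj: "g \<in> Perm \<Longrightarrow> g a = g b \<Longrightarrow> a = b"
  by (metis Perm_inv_cancel(2))

lemma Perm_sw: "sw a b \<in> Perm"
proof -
  have "sw a b \<circ> sw a b = id" by (auto simp: sw_def)
  then have "bij (sw a b)" using o_bij by blast
  moreover have "{c. sw a b c \<noteq> c} \<subseteq> {a, b}" by (auto simp: sw_def)
  then have "finite {c. sw a b c \<noteq> c}" by (rule finite_subset) simp
  ultimately show ?thesis by (simp add: Perm_def Sb_def)
qed

lemma Perm_extend:
  assumes "finite U" "inj_on h U"
  shows "\<exists>g\<in>Perm. \<forall>a\<in>U. g a = h a"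
  using assms
proof (induction U rule: finite_induct)
  case empty
  then show ?case using Perm_id by blast
next
  case (insert a U)
  then have inj: "inj_on h U" and na: "h a \<notin> h ` U" by auto
  obtain g where g: "g \<in> Perm" "\<forall>u\<in>U. g u = h u" using insert.IH inj by blast
  define g' where "g' = sw (g a) (h a) \<circ> g"
  have "g' \<in> Perm" unfolding g'_def using g Perm_comp Perm_sw by blast
  moreover have "\<forall>u\<in>insert a U. g' u = h u"
  proof
    fix u assume u: "u \<in> insert a U"
    show "g' u = h u"
    proof (cases "u = a")
      case True then show ?thesis by (simp add: g'_def sw_simps)
    next
      case False
      then have uU: "u \<in> U" using u by simp
      have "h u \<noteq> h a" using na uU by (metis image_eqI)
      moreover have "h u \<noteq> g a" using g uU False insert.hyps(2) Perm_inj by metis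
      ultimately show ?thesis using g uU by (simp add: g'_def sw_simps)
    qed
  qed
  ultimately show ?case by blast
qed

abbreviation Fstep where
  "Fstep X act \<equiv> Id_on (Sb \<times> X) \<union> F_gen X act \<union> (F_gen X act)\<inverse>"

lemma F_rel_sym: "(p, q) \<in> F_rel X act \<Longrightarrow> (q, p) \<in> F_rel X act"
proof -
  have "sym (Fstep X act)" by (auto simp: sym_def)
  then have "sym (F_rel X act)" unfolding F_rel_def by (rule sym_rtrancl)
  then show "(p, q) \<in> F_rel X act \<Longrightarrow> (q, p) \<in> F_rel X act" by (auto dest: symD)
qed

lemma F_rel_trans: "(p, q) \<in> F_rel X act \<Longrightarrow> (q, r) \<in> F_rel X act \<Longrightarrow> (p, r) \<in> F_rel X act"
  unfolding F_rel_def by (rule rtrancl_trans)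

lemma F_rel_refl: "(p, p) \<in> F_rel X act"
  unfolding F_rel_def by simp

lemma F_gen_rel: "(p, q) \<in> F_gen X act \<Longrightarrow> (p, q) \<in> F_rel X act"
  unfolding F_rel_def by auto

lemma cls_eq: "(p, q) \<in> F_rel X act \<Longrightarrow> F_rel X act `` {p} = F_rel X act `` {q}"
  using F_rel_sym F_rel_trans by blast

lemma cls_eqD: "F_rel X act `` {p} = F_rel X act `` {q} \<Longrightarrow> (p, q) \<in> F_rel X act"
  using F_rel_refl by blast

lemma F_genI1: "m \<in> Sb \<Longrightarrow> g \<in> Perm \<Longrightarrow> x \<in> X \<Longrightarrow> ((m, act g x), (m \<circ> g, x)) \<in> F_gen X act"
  unfolding F_gen_def by blast

lemma F_genI2: "m \<in> Sb \<Longrightarrow> m' \<in> Sb \<Longrightarrow> x \<in> X \<Longrightarrow> finite C \<Longrightarrow> supports Perm act C x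
  \<Longrightarrow> \<forall>a\<in>C. m a = m' a \<Longrightarrow> ((m, x), (m', x)) \<in> F_gen X act"
  unfolding F_gen_def by blast

lemma F_genE:
  assumes "(p, q) \<in> F_gen X act"
  obtains (a) m g x where "p = (m, act g x)" "q = (m \<circ> g, x)" "m \<in> Sb" "g \<in> Perm" "x \<in> X"
  | (b) m m' x C where "p = (m, x)" "q = (m', x)" "m \<in> Sb" "m' \<in> Sb" "x \<in> X"
       "finite C" "supports Perm act C x" "\<forall>a\<in>C. m a = m' a"
proof -
  have "(p, q) \<in> {((m, act g x), (m \<circ> g, x)) | m g x. m \<in> Sb \<and> g \<in> Perm \<and> x \<in> X} \<or>
        (p, q) \<in> {((m, x), (m', x)) | m m' x. m \<in> Sb \<and> m' \<in> Sb \<and> x \<in> X \<and>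
        (\<exists>C. finite C \<and> supports Perm act C x \<and> (\<forall>a\<in>C. m a = m' a))}"
    using assms unfolding F_gen_def by (rule UnE) simp_all
  then show ?thesis
  proof
    assume "(p, q) \<in> {((m, act g x), (m \<circ> g, x)) | m g x. m \<in> Sb \<and> g \<in> Perm \<and> x \<in> X}"
    then obtain m g x where "(p, q) = ((m, act g x), (m \<circ> g, x))" "m \<in> Sb" "g \<in> Perm" "x \<in> X"
      by (simp only: mem_Collect_eq) blast
    then show ?thesis using that(1) by simp
  next
    assume "(p, q) \<in> {((m, x), (m', x)) | m m' x. m \<in> Sb \<and> m' \<in> Sb \<and> x \<in> X \<and>
        (\<exists>C. finite C \<and> supports Perm act C x \<and> (\<forall>a\<in>C. m a = m' a))}"
    then obtain m m' x C where "(p, q) = ((m, x), (m', x))" "m \<in> Sb" "m' \<in> Sb" "x \<in> X"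
      "finite C" "supports Perm act C x" "\<forall>a\<in>C. m a = m' a"
      by (simp only: mem_Collect_eq) blast
    then show ?thesis using that(2) by simp
  qed
qed

lemma Fstep_comp:
  assumes n: "n \<in> Sb" and st: "(q, r) \<in> Fstep X act"
  shows "((n \<circ> fst q, snd q), (n \<circ> fst r, snd r)) \<in> Fstep X act"
  using st
proof (elim UnE)
  assume "(q, r) \<in> Id_on (Sb \<times> X)"
  then have rq: "r = q" and qX: "q \<in> Sb \<times> X" by (auto simp: Id_on_def)
  have "n \<circ> fst q \<in> Sb" using Sb_comp[OF n] qX by auto
  then have "(n \<circ> fst q, snd q) \<in> Sb \<times> X" using qX by auto
  then have "((n \<circ> fst q, snd q), (n \<circ> fst q, snd q)) \<in> Id_on (Sb \<times> X)" by (rule Id_onI)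
  then show ?thesis using rq by simp
next
  assume "(q, r) \<in> F_gen X act"
  then show ?thesis
  proof (cases rule: F_genE)
    case (a m g x)
    have "n \<circ> m \<in> Sb" using Sb_comp[OF n] a(3) .
    then have "((n \<circ> m, act g x), ((n \<circ> m) \<circ> g, x)) \<in> F_gen X act"
      by (rule F_genI1[OF _ a(4) a(5)])
    then show ?thesis using a by (simp add: o_assoc)
  next
    case (b m m' x C)
    have "n \<circ> m \<in> Sb" "n \<circ> m' \<in> Sb" using Sb_comp[OF n] b(3,4) by auto
    moreover have "\<forall>a\<in>C. (n \<circ> m) a = (n \<circ> m') a" using b(8) by simp
    ultimately have "((n \<circ> m, x), (n \<circ> m', x)) \<in> F_gen X act"
      using F_genI2[OF _ _ b(5) b(6) b(7)] by blast
    then show ?thesis using b by simp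
  qed
next
  assume "(q, r) \<in> (F_gen X act)\<inverse>"
  then have "(r, q) \<in> F_gen X act" by simp
  then show ?thesis
  proof (cases rule: F_genE)
    case (a m g x)
    have "n \<circ> m \<in> Sb" using Sb_comp[OF n] a(3) .
    then have "((n \<circ> m, act g x), ((n \<circ> m) \<circ> g, x)) \<in> F_gen X act"
      by (rule F_genI1[OF _ a(4) a(5)])
    then show ?thesis using a by (simp add: o_assoc)
  next
    case (b m m' x C)
    have "n \<circ> m \<in> Sb" "n \<circ> m' \<in> Sb" using Sb_comp[OF n] b(3,4) by auto
    moreover have "\<forall>a\<in>C. (n \<circ> m) a = (n \<circ> m') a" using b(8) by simp
    ultimately have "((n \<circ> m, x), (n \<circ> m', x)) \<in> F_gen X act"
      using F_genI2[OF _ _ b(5) b(6) b(7)] by blast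
    then show ?thesis using b by simp
  qed
qed
lemma F_rel_comp:
  assumes n: "n \<in> Sb" and pq: "(p, q) \<in> F_rel X act"
  shows "((n \<circ> fst p, snd p), (n \<circ> fst q, snd q)) \<in> F_rel X act"
  using pq unfolding F_rel_def
proof (induction rule: rtrancl_induct)
  case base
  then show ?case by simp
next
  case (step q r)
  then show ?case using Fstep_comp[OF n step(2)] by (meson rtrancl.rtrancl_into_rtrancl)
qed

lemma F_act_cls:
  assumes n: "n \<in> Sb"
  shows "F_act X act n (F_rel X act `` {(m, x)}) = F_rel X act `` {(n \<circ> m, x)}"
proof
  show "F_act X act n (F_rel X act `` {(m, x)}) \<subseteq> F_rel X act `` {(n \<circ> m, x)}"
  proof
    fix z assume "z \<in> F_act X act n (F_rel X act `` {(m, x)})"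
    then obtain m' x' where mx: "((m, x), (m', x')) \<in> F_rel X act"
      and z: "z \<in> F_rel X act `` {(n \<circ> m', x')}"
      unfolding F_act_def by blast
    have "((n \<circ> m, x), (n \<circ> m', x')) \<in> F_rel X act" using F_rel_comp[OF n mx] by simp
    then show "z \<in> F_rel X act `` {(n \<circ> m, x)}" using z cls_eq by blast
  qed
next
  show "F_rel X act `` {(n \<circ> m, x)} \<subseteq> F_act X act n (F_rel X act `` {(m, x)})"
    unfolding F_act_def using F_rel_refl by fastforce
qed



definition Rel :: "'x set \<Rightarrow> ((nat \<Rightarrow> nat) \<Rightarrow> 'x \<Rightarrow> 'x) \<Rightarrow> ((nat \<Rightarrow> nat) \<times> 'x) \<Rightarrow> ((nat \<Rightarrow> nat) \<times> 'x) \<Rightarrow> bool" where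
 "Rel X act p q \<longleftrightarrow> fst p \<in> Sb \<and> fst q \<in> Sb \<and> snd p \<in> X \<and> snd q \<in> X \<and>
   (\<exists>g\<in>Perm. snd p = act g (snd q) \<and>
      (\<exists>C. finite C \<and> supports Perm act C (snd q) \<and> (\<forall>a\<in>C. fst q a = fst p (g a))))"

definition phi :: "'x set \<Rightarrow> ((nat \<Rightarrow> nat) \<Rightarrow> 'x \<Rightarrow> 'x) \<Rightarrow> ((nat \<Rightarrow> nat) \<times> 'x list) \<Rightarrow> ((nat \<Rightarrow> nat) \<times> 'x) set list" where
  "phi X act p = map (\<lambda>x. F_rel X act `` {(fst p, x)}) (snd p)"

definition fmap :: "'x set \<Rightarrow> ((nat \<Rightarrow> nat) \<Rightarrow> 'x \<Rightarrow> 'x) \<Rightarrow> ((nat \<Rightarrow> nat) \<times> 'x list) set \<Rightarrow> ((nat \<Rightarrow> nat) \<times> 'x) set list" where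
  "fmap X act c = phi X act (SOME p. p \<in> Sb \<times> sep_words X act \<and> c = F_rel (sep_words X act) (word_act act) `` {p})"

lemma carrierE: "c \<in> F_carrier A actA \<Longrightarrow> \<exists>p\<in>Sb \<times> A. c = F_rel A actA `` {p}"
  unfolding F_carrier_def quotient_def by blast

lemma carrierI: "p \<in> Sb \<times> A \<Longrightarrow> F_rel A actA `` {p} \<in> F_carrier A actA"
  unfolding F_carrier_def by (rule quotientI)

context
  fixes X :: "'x set" and act :: "(nat \<Rightarrow> nat) \<Rightarrow> 'x \<Rightarrow> 'x"
  assumes nom: "nominal_set Perm X act"
begin

lemma act_closed: "g \<in> Perm \<Longrightarrow> x \<in> X \<Longrightarrow> act g x \<in> X"
  using nom unfolding nominal_set_def by blast
lemma act_id: "x \<in> X \<Longrightarrow> act id x = x"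
  using nom unfolding nominal_set_def by blast
lemma act_comp: "g \<in> Perm \<Longrightarrow> h \<in> Perm \<Longrightarrow> x \<in> X \<Longrightarrow> act (g \<circ> h) x = act g (act h x)"
  using nom unfolding nominal_set_def by blast
lemma has_supp: "x \<in> X \<Longrightarrow> \<exists>C. finite C \<and> supports Perm act C x"
  using nom unfolding nominal_set_def by blast

lemma act_inv: "g \<in> Perm \<Longrightarrow> x \<in> X \<Longrightarrow> act (inv g) (act g x) = x"
  using act_comp[OF Perm_inv] Perm_inv_comp act_id by metis

lemma supp_fix: "supports Perm act C x \<Longrightarrow> x \<in> X \<Longrightarrow> g \<in> Perm \<Longrightarrow> (\<forall>a\<in>C. g a = a) \<Longrightarrow> act g x = x"
  unfolding supports_def using act_id Perm_id by (metis id_apply)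

lemma supp_from_fix:
  assumes x: "x \<in> X" and fx: "\<forall>\<pi>\<in>Perm. (\<forall>a\<in>C. \<pi> a = a) \<longrightarrow> act \<pi> x = x"
  shows "supports Perm act C x"
  unfolding supports_def
proof (intro ballI impI)
  fix m1 m2 assume m: "m1 \<in> Perm" "m2 \<in> Perm" and ag: "\<forall>a\<in>C. m1 a = m2 a"
  define \<pi> where "\<pi> = inv m2 \<circ> m1"
  have p: "\<pi> \<in> Perm" unfolding \<pi>_def using m Perm_inv Perm_comp by blast
  have "\<forall>a\<in>C. \<pi> a = a" unfolding \<pi>_def using ag m Perm_inv_cancel by simp
  then have "act \<pi> x = x" using fx p by blast
  moreover have "m2 \<circ> \<pi> = m1" unfolding \<pi>_def using m Perm_inv_cancel by (auto simp: fun_eq_iff)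
  ultimately show "act m1 x = act m2 x" using act_comp[OF m(2) p x] by simp
qed

lemma supp_image:
  assumes "supports Perm act C x" "x \<in> X" "h \<in> Perm"
  shows "supports Perm act (h ` C) (act h x)"
  unfolding supports_def
proof (intro ballI impI)
  fix m1 m2 assume m: "m1 \<in> Perm" "m2 \<in> Perm" and ag: "\<forall>a\<in>h ` C. m1 a = m2 a"
  have "act (m1 \<circ> h) x = act (m2 \<circ> h) x"
    using assms(1) ag m assms(3) Perm_comp unfolding supports_def by auto
  then show "act m1 (act h x) = act m2 (act h x)" using act_comp m assms by metis
qed

lemma remove_one:
  assumes fC: "finite C" and fD: "finite D" and sC: "supports Perm act C x"
    and sD: "supports Perm act D x" and x: "x \<in> X" and a: "a \<in> C" "a \<notin> D"
  shows "supports Perm act (C - {a}) x"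
proof (rule supp_from_fix[OF x], intro ballI impI)
  fix \<pi> assume p: "\<pi> \<in> Perm" and fix\<pi>: "\<forall>d\<in>C - {a}. \<pi> d = d"
  show "act \<pi> x = x"
  proof (cases "\<pi> a = a")
    case True
    then have "\<forall>d\<in>C. \<pi> d = d" using fix\<pi> by blast
    then show ?thesis using supp_fix[OF sC x p] by blast
  next
    case False
    define c where "c = \<pi> a"
    have ca: "c \<noteq> a" using False c_def by simp
    have cC: "c \<notin> C"
    proof
      assume "c \<in> C"
      then have "\<pi> c = c" using fix\<pi> ca by blast
      then have "\<pi> c = \<pi> a" using c_def by simp
      then show False using Perm_inj[OF p] ca by blast
    qed
    have "act \<pi> x = act (sw a c) x"
      using sC p Perm_sw unfolding supports_def
    proof -
      have "\<forall>d\<in>C. \<pi> d = sw a c d"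
      proof
        fix d assume d: "d \<in> C"
        show "\<pi> d = sw a c d"
        proof (cases "d = a")
          case True then show ?thesis by (simp add: sw_simps c_def)
        next
          case False
          then have "d \<noteq> c" using d cC by blast
          then show ?thesis using False fix\<pi> d by (simp add: sw_simps)
        qed
      qed
      then show ?thesis using sC p Perm_sw unfolding supports_def by blast
    qed
    have fin: "finite (C \<union> D \<union> {a, c})" using fC fD by simp
    obtain b where b: "b \<notin> C \<union> D \<union> {a, c}"
      using ex_new_if_finite[OF infinite_UNIV_nat fin] by (elim exE)
    have eq: "sw a c = sw a b \<circ> (sw b c \<circ> sw a b)"
    proof
      fix d
      have ba: "b \<noteq> a" "b \<noteq> c" using b by auto
      show "sw a c d = (sw a b \<circ> (sw b c \<circ> sw a b)) d"
      proof (cases "d = a")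
        case True then show ?thesis using ba ca by (simp add: sw_simps)
      next
        case na: False
        show ?thesis
        proof (cases "d = c")
          case True then show ?thesis using ba ca na by (simp add: sw_simps)
        next
          case nc: False
          show ?thesis
          proof (cases "d = b")
            case True then show ?thesis using ba ca na nc by (simp add: sw_simps)
          next
            case False then show ?thesis using ba ca na nc by (simp add: sw_simps)
          qed
        qed
      qed
    qed
    have "\<forall>d\<in>D. sw a b d = d" using a b by (auto simp: sw_def)
    then have f1: "act (sw a b) x = x"
      using supp_fix[OF sD x Perm_sw] by blast
    have "\<forall>d\<in>C. sw b c d = d" using cC b by (auto simp: sw_def)
    then have f2: "act (sw b c) x = x"
      using supp_fix[OF sC x Perm_sw] by blast
    have "act (sw a c) x = act (sw a b) (act (sw b c \<circ> sw a b) x)"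
      unfolding eq using act_comp[OF Perm_sw Perm_comp[OF Perm_sw Perm_sw] x] .
    also have "\<dots> = act (sw a b) (act (sw b c) (act (sw a b) x))"
      using act_comp[OF Perm_sw Perm_sw x] by simp
    also have "\<dots> = x" using f1 f2 by simp
    finally show ?thesis using \<open>act \<pi> x = act (sw a c) x\<close> by simp
  qed
qed

lemma supp_inter_aux:
  "finite C \<Longrightarrow> finite D \<Longrightarrow> supports Perm act C x \<Longrightarrow> supports Perm act D x \<Longrightarrow> x \<in> X
   \<Longrightarrow> card (C - D) = n \<Longrightarrow> supports Perm act (C \<inter> D) x"
proof (induction n arbitrary: C)
  case 0
  then have "C - D = {}" by simp
  then have "C \<inter> D = C" by blast
  then show ?case using 0 by simp
next
  case (Suc n)
  have "C - D \<noteq> {}" using Suc.prems(6) by (metis card.empty nat.simps(3))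
  then obtain a where a: "a \<in> C" "a \<notin> D" by blast
  let ?C = "C - {a}"
  have "supports Perm act ?C x" using remove_one Suc.prems a by blast
  moreover have "card (?C - D) = n"
  proof -
    have "?C - D = (C - D) - {a}" by blast
    have "card ((C - D) - {a}) = card (C - D) - 1"
      using Suc.prems(1) a by (intro card_Diff_singleton) auto
    then show ?thesis using Suc.prems(6) \<open>?C - D = (C - D) - {a}\<close> by simp
  qed
  moreover have "?C \<inter> D = C \<inter> D" using a by blast
  ultimately show ?case using Suc.IH[of ?C] Suc.prems by auto
qed

lemma supp_inter:
  "finite C \<Longrightarrow> finite D \<Longrightarrow> supports Perm act C x \<Longrightarrow> supports Perm act D x \<Longrightarrow> x \<in> X
   \<Longrightarrow> supports Perm act (C \<inter> D) x"
  using supp_inter_aux by blast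

lemma Rel_refl: assumes p: "p \<in> Sb \<times> X" shows "Rel X act p p"
proof -
  have "snd p \<in> X" using p by auto
  then obtain C where C: "finite C" "supports Perm act C (snd p)" using has_supp by blast
  have "snd p = act id (snd p)" using act_id p by auto
  then have "\<exists>g\<in>Perm. snd p = act g (snd p) \<and> (\<exists>C. finite C \<and> supports Perm act C (snd p) \<and> (\<forall>a\<in>C. fst p a = fst p (g a)))"
    using C Perm_id by (intro bexI[of _ id]) auto
  then show ?thesis unfolding Rel_def using p by auto
qed

lemma Rel_trans:
  assumes pq: "Rel X act p q" and qr: "Rel X act q r"
  shows "Rel X act p r"
proof -
  obtain m x where p: "p = (m, x)" by (cases p)
  obtain m' x' where q: "q = (m', x')" by (cases q)
  obtain m'' x'' where r: "r = (m'', x'')" by (cases r)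
  obtain g C' where g: "g \<in> Perm" "x = act g x'" "finite C'" "supports Perm act C' x'"
    "\<forall>a\<in>C'. m' a = m (g a)" using pq unfolding Rel_def p q by auto
  obtain h C'' where h: "h \<in> Perm" "x' = act h x''" "finite C''" "supports Perm act C'' x''"
    "\<forall>a\<in>C''. m'' a = m' (h a)" using qr unfolding Rel_def q r by auto
  have X: "m \<in> Sb" "m'' \<in> Sb" "x \<in> X" "x'' \<in> X" using pq qr unfolding Rel_def p q r by auto
  have x'X: "x' \<in> X" using pq unfolding Rel_def p q by auto
  have "x'' = act (inv h) x'" using h act_inv X by simp
  then have s1: "supports Perm act (inv h ` C') x''"
    using supp_image[OF g(4) x'X Perm_inv[OF h(1)]] by simp
  define D where "D = C'' \<inter> inv h ` C'"
  have sD: "supports Perm act D x''" unfolding D_def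
    using supp_inter[OF h(3) _ h(4) s1 X(4)] g(3) by blast
  have fD: "finite D" unfolding D_def using h(3) by blast
  have "\<forall>a\<in>D. m'' a = m (g (h a))"
  proof
    fix a assume "a \<in> D"
    then obtain b where b: "b \<in> C'" "a = inv h b" "a \<in> C''" unfolding D_def by blast
    then have "h a = b" using Perm_inv_cancel h by simp
    then show "m'' a = m (g (h a))" using b g h by simp
  qed
  moreover have "x = act (g \<circ> h) x''" using g h act_comp X by simp
  ultimately have "\<exists>k\<in>Perm. x = act k x'' \<and> (\<exists>C. finite C \<and> supports Perm act C x'' \<and> (\<forall>a\<in>C. m'' a = m (k a)))"
    using Perm_comp[OF g(1) h(1)] sD fD by (intro bexI[of _ "g \<circ> h"]) auto
  then show ?thesis unfolding Rel_def p r using X by simp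
qed

lemma Rel_step:
  assumes p: "p \<in> Sb \<times> X" and st: "(p, q) \<in> Fstep X act"
  shows "Rel X act p q"
  using st
proof (elim UnE)
  assume "(p, q) \<in> Id_on (Sb \<times> X)"
  then have "q = p" by (auto simp: Id_on_def)
  then show ?thesis using Rel_refl[OF p] by simp
next
  assume "(p, q) \<in> F_gen X act"
  then show ?thesis
  proof (cases rule: F_genE)
    case (a m g x)
    obtain C where C: "finite C" "supports Perm act C x" using has_supp a(5) by blast
    have "\<forall>b\<in>C. (m \<circ> g) b = m (g b)" by simp
    then have E: "\<exists>g'\<in>Perm. act g x = act g' x \<and> (\<exists>C. finite C \<and> supports Perm act C x \<and> (\<forall>b\<in>C. (m \<circ> g) b = m (g' b)))"
      using a(4) C by blast
    have "m \<circ> g \<in> Sb" using Sb_comp[OF a(3) Perm_Sb[OF a(4)]] .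
    moreover have "act g x \<in> X" using act_closed a(4,5) by blast
    ultimately show ?thesis unfolding Rel_def a(1,2) using a(3,5) E by (simp only: fst_conv snd_conv; blast?)
  next
    case (b m m' x C)
    have "x = act id x" using act_id b(5) by simp
    moreover have "\<forall>a\<in>C. m' a = m (id a)" using b(8) by simp
    ultimately have E: "\<exists>g\<in>Perm. x = act g x \<and> (\<exists>C. finite C \<and> supports Perm act C x \<and> (\<forall>a\<in>C. m' a = m (g a)))"
      using b(6,7) Perm_id by blast
    show ?thesis unfolding Rel_def b(1,2) using b(3,4,5) E by (simp only: fst_conv snd_conv; blast?)
  qed
next
  assume "(p, q) \<in> (F_gen X act)\<inverse>"
  then have "(q, p) \<in> F_gen X act" by simp
  then show ?thesis
  proof (cases rule: F_genE)
    case (a m g x)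
    obtain C where C: "finite C" "supports Perm act C x" using has_supp a(5) by blast
    have s: "supports Perm act (g ` C) (act g x)" using supp_image[OF C(2) a(5) a(4)] .
    have e2: "\<forall>b\<in>g ` C. m b = (m \<circ> g) (inv g b)" using Perm_inv_cancel[OF a(4)] by auto
    have e1: "x = act (inv g) (act g x)" using act_inv a(4,5) by simp
    have fi: "finite (g ` C)" using C by simp
    have E: "\<exists>g'\<in>Perm. x = act g' (act g x) \<and> (\<exists>C'. finite C' \<and> supports Perm act C' (act g x) \<and> (\<forall>b\<in>C'. m b = (m \<circ> g) (g' b)))"
      using Perm_inv[OF a(4)] e1 e2 fi s by blast
    have "m \<circ> g \<in> Sb" using Sb_comp[OF a(3) Perm_Sb[OF a(4)]] .
    moreover have "act g x \<in> X" using act_closed a(4,5) by blast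
    ultimately show ?thesis unfolding Rel_def a(1,2) using a(3,5) E by (simp only: fst_conv snd_conv; blast?)
  next
    case (b m m' x C)
    have "x = act id x" using act_id b(5) by simp
    moreover have "\<forall>a\<in>C. m a = m' (id a)" using b(8) by simp
    ultimately have E: "\<exists>g\<in>Perm. x = act g x \<and> (\<exists>C. finite C \<and> supports Perm act C x \<and> (\<forall>a\<in>C. m a = m' (g a)))"
      using b(6,7) Perm_id by blast
    show ?thesis unfolding Rel_def b(1,2) using b(3,4,5) E by (simp only: fst_conv snd_conv; blast?)
  qed
qed

lemma F_rel_Rel:
  assumes "(p, q) \<in> F_rel X act" "p \<in> Sb \<times> X"
  shows "Rel X act p q"
  using assms(1) unfolding F_rel_def
proof (induction rule: rtrancl_induct)
  case base
  then show ?case using Rel_refl assms(2) by blast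
next
  case (step q r)
  have "q \<in> Sb \<times> X" using step.IH unfolding Rel_def by (cases q) auto
  then have "Rel X act q r" using Rel_step step by blast
  then show ?case using Rel_trans step.IH by blast
qed


lemma W_X: "w \<in> sep_words X act \<Longrightarrow> set w \<subseteq> X"
  by (induction rule: sep_words.induct) auto

lemma wsupp_elem:
  assumes "supports Perm (word_act act) U w" "y \<in> set w"
  shows "supports Perm act U y"
  unfolding supports_def
proof (intro ballI impI)
  fix m1 m2 assume "m1 \<in> Perm" "m2 \<in> Perm" "\<forall>a\<in>U. m1 a = m2 a"
  then have "map (act m1) w = map (act m2) w" using assms(1) unfolding supports_def word_act_def by blast
  then show "act m1 y = act m2 y" using assms(2) map_eq_conv by metis
qed

lemma wsupp_idx:
  assumes "\<forall>i<length w. supports Perm act (Cs i) (w ! i)"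
  shows "supports Perm (word_act act) (\<Union>i<length w. Cs i) w"
  unfolding supports_def
proof (intro ballI impI)
  fix m1 m2 assume m: "m1 \<in> Perm" "m2 \<in> Perm" and ag: "\<forall>a\<in>(\<Union>i<length w. Cs i). m1 a = m2 a"
  show "word_act act m1 w = word_act act m2 w"
    unfolding word_act_def
  proof (rule nth_equalityI)
    show "length (map (act m1) w) = length (map (act m2) w)" by simp
  next
    fix i assume i: "i < length (map (act m1) w)"
    then have "\<forall>a\<in>Cs i. m1 a = m2 a" using ag by auto
    moreover have "supports Perm act (Cs i) (w ! i)" using assms i by simp
    ultimately have "act m1 (w ! i) = act m2 (w ! i)" using m unfolding supports_def by blast
    then show "map (act m1) w ! i = map (act m2) w ! i" using i by simp
  qed
qed

lemma wsupp_ex: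
  assumes "set w \<subseteq> X"
  shows "\<exists>U. finite U \<and> supports Perm (word_act act) U w"
proof -
  have ex: "\<forall>i. \<exists>C. i < length w \<longrightarrow> finite C \<and> supports Perm act C (w ! i)"
  proof
    fix i
    show "\<exists>C. i < length w \<longrightarrow> finite C \<and> supports Perm act C (w ! i)"
    proof (cases "i < length w")
      case True
      then have "w ! i \<in> X" using assms nth_mem by blast
      then show ?thesis using has_supp by blast
    qed simp
  qed
  obtain Cs where Cs: "\<forall>i. i < length w \<longrightarrow> finite (Cs i) \<and> supports Perm act (Cs i) (w ! i)"
    using choice[OF ex] by (elim exE)
  have "finite (\<Union>i<length w. Cs i)" using Cs by auto
  moreover have "supports Perm (word_act act) (\<Union>i<length w. Cs i) w" using wsupp_idx Cs by blast
  ultimately show ?thesis by blast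
qed

lemma W_disj:
  assumes "w \<in> sep_words X act"
  shows "\<exists>D. (\<forall>i<length w. finite (D i) \<and> supports Perm act (D i) (w ! i)) \<and>
             (\<forall>i<length w. \<forall>j<length w. i \<noteq> j \<longrightarrow> D i \<inter> D j = {})"
  using assms
proof (induction rule: sep_words.induct)
  case Nil
  show ?case by simp
next
  case (snoc w x)
  obtain D where D: "\<forall>i<length w. finite (D i) \<and> supports Perm act (D i) (w ! i)"
    "\<forall>i<length w. \<forall>j<length w. i \<noteq> j \<longrightarrow> D i \<inter> D j = {}" using snoc.IH by blast
  obtain C E where CE: "finite C" "finite E" "supports Perm (word_act act) C w"
    "supports Perm act E x" "C \<inter> E = {}" using snoc.hyps(3) unfolding separated_def by blast
  define D' where "D' i = (if i < length w then D i \<inter> C else E)" for i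
  have wX: "set w \<subseteq> X" using W_X snoc.hyps(1) .
  have 1: "\<forall>i<length (w @ [x]). finite (D' i) \<and> supports Perm act (D' i) ((w @ [x]) ! i)"
  proof (intro allI impI)
    fix i assume i: "i < length (w @ [x])"
    show "finite (D' i) \<and> supports Perm act (D' i) ((w @ [x]) ! i)"
    proof (cases "i < length w")
      case True
      have wi: "w ! i \<in> X" using wX True nth_mem by blast
      have sC: "supports Perm act C (w ! i)" using wsupp_elem[OF CE(3)] True nth_mem by blast
      have "supports Perm act (D i \<inter> C) (w ! i)"
        using supp_inter[of "D i" C "w ! i"] D(1) True CE(1) wi sC by blast
      then show ?thesis using True D(1) by (simp add: D'_def nth_append)
    next
      case False
      then have "i = length w" using i by simp
      then show ?thesis using CE by (simp add: D'_def nth_append)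
    qed
  qed
  have 2: "\<forall>i<length (w @ [x]). \<forall>j<length (w @ [x]). i \<noteq> j \<longrightarrow> D' i \<inter> D' j = {}"
  proof (intro allI impI)
    fix i j assume i: "i < length (w @ [x])" and j: "j < length (w @ [x])" and ij: "i \<noteq> j"
    show "D' i \<inter> D' j = {}"
    proof (cases "i < length w")
      case True
      show ?thesis
      proof (cases "j < length w")
        case True
        then show ?thesis using \<open>i < length w\<close> ij D(2) by (auto simp: D'_def)
      next
        case False
        then show ?thesis using \<open>i < length w\<close> CE(5) by (auto simp: D'_def)
      qed
    next
      case False
      then have "i = length w" using i by simp
      then have "j < length w" using j ij by simp
      then show ?thesis using \<open>i = length w\<close> CE(5) by (auto simp: D'_def)
    qed
  qed
  show ?case using 1 2 by blast
qed

lemma phi_gen: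
  assumes "(q, r) \<in> F_gen (sep_words X act) (word_act act)"
  shows "phi X act q = phi X act r"
  using assms
proof (cases rule: F_genE)
  case (a m g w)
  have wX: "set w \<subseteq> X" using W_X a(5) .
  have "\<forall>x\<in>set w. F_rel X act `` {(m, act g x)} = F_rel X act `` {(m \<circ> g, x)}"
  proof
    fix x assume "x \<in> set w"
    then have "x \<in> X" using wX by blast
    then show "F_rel X act `` {(m, act g x)} = F_rel X act `` {(m \<circ> g, x)}"
      by (rule cls_eq[OF F_gen_rel[OF F_genI1[OF a(3) a(4)]]])
  qed
  then show ?thesis unfolding phi_def a(1,2) word_act_def by simp
next
  case (b m m' w C)
  have wX: "set w \<subseteq> X" using W_X b(5) .
  have "\<forall>x\<in>set w. F_rel X act `` {(m, x)} = F_rel X act `` {(m', x)}"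
  proof
    fix x assume x: "x \<in> set w"
    then have "x \<in> X" using wX by blast
    moreover have "supports Perm act C x" using wsupp_elem[OF b(7) x] .
    ultimately show "F_rel X act `` {(m, x)} = F_rel X act `` {(m', x)}"
      by (rule cls_eq[OF F_gen_rel[OF F_genI2[OF b(3) b(4) _ b(6) _ b(8)]]])
  qed
  then show ?thesis unfolding phi_def b(1,2) by simp
qed

lemma phi_resp:
  assumes "(p, q) \<in> F_rel (sep_words X act) (word_act act)"
  shows "phi X act p = phi X act q"
  using assms unfolding F_rel_def
proof (induction rule: rtrancl_induct)
  case base
  then show ?case by simp
next
  case (step q r)
  have "phi X act q = phi X act r"
    using step(2)
  proof (elim UnE)
    assume "(q, r) \<in> Id_on (Sb \<times> sep_words X act)"
    then show ?thesis by (auto simp: Id_on_def)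
  next
    assume "(q, r) \<in> F_gen (sep_words X act) (word_act act)"
    then show ?thesis by (rule phi_gen)
  next
    assume "(q, r) \<in> (F_gen (sep_words X act) (word_act act))\<inverse>"
    then have "(r, q) \<in> F_gen (sep_words X act) (word_act act)" by simp
    from phi_gen[OF this] show ?thesis by simp
  qed
  then show ?case using step.IH by simp
qed

lemma fmap_cls:
  assumes p: "p \<in> Sb \<times> sep_words X act"
  shows "fmap X act (F_rel (sep_words X act) (word_act act) `` {p}) = phi X act p"
proof -
  define P where "P p' \<longleftrightarrow> p' \<in> Sb \<times> sep_words X act \<and> F_rel (sep_words X act) (word_act act) `` {p} = F_rel (sep_words X act) (word_act act) `` {p'}" for p'
  define p' where "p' = (SOME p'. P p')"
  have "P p" using p unfolding P_def by simp
  then have "P p'" unfolding p'_def by (rule someI)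
  then have "F_rel (sep_words X act) (word_act act) `` {p'} = F_rel (sep_words X act) (word_act act) `` {p}"
    unfolding P_def by simp
  then have "(p', p) \<in> F_rel (sep_words X act) (word_act act)" by (rule cls_eqD)
  then have "phi X act p' = phi X act p" by (rule phi_resp)
  moreover have "fmap X act (F_rel (sep_words X act) (word_act act) `` {p}) = phi X act p'"
    unfolding fmap_def p'_def P_def by simp
  ultimately show ?thesis by simp
qed


lemma inj_core:
  assumes w: "w \<in> sep_words X act" and w': "w' \<in> sep_words X act"
    and len: "length w = length w'" and m: "m \<in> Sb" "m' \<in> Sb"
    and R: "\<forall>i<length w. Rel X act (m, w ! i) (m', w' ! i)"
  shows "((m, w), (m', w')) \<in> F_rel (sep_words X act) (word_act act)"
proof -
  define n where "n = length w"
  have wX: "\<And>i. i < n \<Longrightarrow> w ! i \<in> X" using W_X[OF w] nth_mem n_def by blast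
  have w'X: "\<And>i. i < n \<Longrightarrow> w' ! i \<in> X" using W_X[OF w'] nth_mem n_def len by (metis subsetD)
  obtain D where D: "\<forall>i<length w'. finite (D i) \<and> supports Perm act (D i) (w' ! i)"
    "\<forall>i<length w'. \<forall>j<length w'. i \<noteq> j \<longrightarrow> D i \<inter> D j = {}" using W_disj[OF w'] by (elim exE conjE)
  obtain E where E: "\<forall>i<length w. finite (E i) \<and> supports Perm act (E i) (w ! i)"
    "\<forall>i<length w. \<forall>j<length w. i \<noteq> j \<longrightarrow> E i \<inter> E j = {}" using W_disj[OF w] by (elim exE conjE)
  have ex: "\<forall>i. \<exists>gC. i < n \<longrightarrow> fst gC \<in> Perm \<and> w ! i = act (fst gC) (w' ! i) \<and> finite (snd gC) \<and>
      supports Perm act (snd gC) (w' ! i) \<and> (\<forall>a\<in>snd gC. m' a = m (fst gC a))"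
  proof
    fix i
    show "\<exists>gC. i < n \<longrightarrow> fst gC \<in> Perm \<and> w ! i = act (fst gC) (w' ! i) \<and> finite (snd gC) \<and>
      supports Perm act (snd gC) (w' ! i) \<and> (\<forall>a\<in>snd gC. m' a = m (fst gC a))"
    proof (cases "i < n")
      case True
      then have "Rel X act (m, w ! i) (m', w' ! i)" using R n_def by simp
      then obtain g C where "g \<in> Perm" "w ! i = act g (w' ! i)" "finite C"
        "supports Perm act C (w' ! i)" "\<forall>a\<in>C. m' a = m (g a)" unfolding Rel_def by auto
      then show ?thesis by (intro exI[of _ "(g, C)"]) simp
    qed simp
  qed
  obtain GC where GC: "\<forall>i. i < n \<longrightarrow> fst (GC i) \<in> Perm \<and> w ! i = act (fst (GC i)) (w' ! i) \<and> finite (snd (GC i)) \<and>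
      supports Perm act (snd (GC i)) (w' ! i) \<and> (\<forall>a\<in>snd (GC i). m' a = m (fst (GC i) a))"
    using choice[OF ex] by (elim exE)
  define G where "G i = fst (GC i)" for i
  define Cs where "Cs i = snd (GC i)" for i
  have G: "\<And>i. i < n \<Longrightarrow> G i \<in> Perm" and Gw: "\<And>i. i < n \<Longrightarrow> w ! i = act (G i) (w' ! i)"
    and Cf: "\<And>i. i < n \<Longrightarrow> finite (Cs i)" and Cs: "\<And>i. i < n \<Longrightarrow> supports Perm act (Cs i) (w' ! i)"
    and Cm: "\<And>i a. i < n \<Longrightarrow> a \<in> Cs i \<Longrightarrow> m' a = m (G i a)"
    using GC unfolding G_def Cs_def by auto
  define K where "K i = Cs i \<inter> D i \<inter> inv (G i) ` E i" for i
  have Kf: "\<And>i. i < n \<Longrightarrow> finite (K i)" unfolding K_def using Cf by blast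
  have Ks: "\<And>i. i < n \<Longrightarrow> supports Perm act (K i) (w' ! i)"
  proof -
    fix i assume i: "i < n"
    have fD: "finite (D i)" and sD: "supports Perm act (D i) (w' ! i)" using D i len n_def by auto
    have s1: "supports Perm act (Cs i \<inter> D i) (w' ! i)"
      using supp_inter[OF Cf[OF i] fD Cs[OF i] sD w'X[OF i]] .
    have fE: "finite (E i)" and sE: "supports Perm act (E i) (w ! i)" using E i n_def by auto
    have "act (inv (G i)) (w ! i) = w' ! i" using Gw[OF i] act_inv[OF G[OF i] w'X[OF i]] by simp
    then have s2: "supports Perm act (inv (G i) ` E i) (w' ! i)"
      using supp_image[OF sE wX[OF i] Perm_inv[OF G[OF i]]] by simp
    have "finite (Cs i \<inter> D i)" using Cf[OF i] by blast
    moreover have "finite (inv (G i) ` E i)" using fE by blast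
    ultimately have "supports Perm act ((Cs i \<inter> D i) \<inter> inv (G i) ` E i) (w' ! i)"
      by (rule supp_inter[OF _ _ s1 s2 w'X[OF i]])
    then show "supports Perm act (K i) (w' ! i)" unfolding K_def .
  qed
  have Kd: "K i \<inter> K j = {}" if ij: "i < n" "j < n" "i \<noteq> j" for i j
  proof -
    have "D i \<inter> D j = {}" using D(2) ij len n_def by simp
    moreover have "K i \<subseteq> D i" "K j \<subseteq> D j" unfolding K_def by auto
    ultimately show ?thesis by blast
  qed
  have GK: "\<And>i a. i < n \<Longrightarrow> a \<in> K i \<Longrightarrow> G i a \<in> E i"
  proof -
    fix i a assume i: "i < n" and a: "a \<in> K i"
    then obtain b where "b \<in> E i" "a = inv (G i) b" unfolding K_def by blast
    then show "G i a \<in> E i" using Perm_inv_cancel(1)[OF G[OF i]] by simp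
  qed
  define U where "U = (\<Union>i<n. K i)"
  define idx where "idx a = (SOME i. i < n \<and> a \<in> K i)" for a
  have idx: "\<And>i a. i < n \<Longrightarrow> a \<in> K i \<Longrightarrow> idx a = i"
  proof -
    fix i a assume i: "i < n" and a: "a \<in> K i"
    have "\<exists>j. j < n \<and> a \<in> K j" using i a by blast
    then have "idx a < n \<and> a \<in> K (idx a)" unfolding idx_def by (rule someI_ex)
    show "idx a = i"
    proof (rule ccontr)
      assume ne: "idx a \<noteq> i"
      have "K (idx a) \<inter> K i = {}" using Kd[of "idx a" i] \<open>idx a < n \<and> a \<in> K (idx a)\<close> i ne by blast
      then show False using \<open>idx a < n \<and> a \<in> K (idx a)\<close> a by blast
    qed
  qed
  define h where "h a = G (idx a) a" for a
  have hK: "\<And>i a. i < n \<Longrightarrow> a \<in> K i \<Longrightarrow> h a = G i a" unfolding h_def using idx by simp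
  have inj: "inj_on h U"
  proof (rule inj_onI)
    fix a b assume a: "a \<in> U" and b: "b \<in> U" and hab: "h a = h b"
    obtain i where i: "i < n" "a \<in> K i" using a unfolding U_def by blast
    obtain j where j: "j < n" "b \<in> K j" using b unfolding U_def by blast
    have "G i a = G j b" using hab hK i j by simp
    moreover have "G i a \<in> E i" "G j b \<in> E j" using GK i j by auto
    have "i = j"
    proof (rule ccontr)
      assume ne: "i \<noteq> j"
      then have "E i \<inter> E j = {}" using E(2) i(1) j(1) n_def by simp
      then show False using \<open>G i a = G j b\<close> \<open>G i a \<in> E i\<close> \<open>G j b \<in> E j\<close> by auto
    qed
    then show "a = b" using \<open>G i a = G j b\<close> Perm_inj[OF G[OF i(1)]] by simp
  qed
  have fU: "finite U" unfolding U_def using Kf by blast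
  obtain g where g: "g \<in> Perm" "\<forall>a\<in>U. g a = h a" using Perm_extend[OF fU inj] by blast
  have gK: "g a = G i a" if ia: "i < n" "a \<in> K i" for i a
  proof -
    have "a \<in> U" unfolding U_def using ia by blast
    then have "g a = h a" using g(2) by simp
    then show ?thesis using hK[OF ia] by simp
  qed
  have ww: "w = word_act act g w'"
    unfolding word_act_def
  proof (rule nth_equalityI)
    show "length w = length (map (act g) w')" using len by simp
  next
    fix i assume i: "i < length w"
    then have i': "i < n" using n_def by simp
    have "act g (w' ! i) = act (G i) (w' ! i)"
      using Ks[OF i'] g(1) G[OF i'] gK[OF i'] unfolding supports_def by blast
    then show "w ! i = map (act g) w' ! i" using Gw[OF i'] i len by simp
  qed
  have sU: "supports Perm (word_act act) U w'"
  proof -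
    have "\<forall>i<length w'. supports Perm act (K i) (w' ! i)" using Ks len n_def by simp
    then have "supports Perm (word_act act) (\<Union>i<length w'. K i) w'" by (rule wsupp_idx)
    then show ?thesis unfolding U_def n_def using len by simp
  qed
  have agree: "\<forall>a\<in>U. (m \<circ> g) a = m' a"
  proof
    fix a assume "a \<in> U"
    then obtain i where i: "i < n" "a \<in> K i" unfolding U_def by blast
    then have "a \<in> Cs i" unfolding K_def by blast
    then show "(m \<circ> g) a = m' a" using Cm[OF i(1)] gK[OF i] by simp
  qed
  have mg: "m \<circ> g \<in> Sb" using Sb_comp[OF m(1) Perm_Sb[OF g(1)]] .
  have 1: "((m, word_act act g w'), (m \<circ> g, w')) \<in> F_rel (sep_words X act) (word_act act)"
    by (rule F_gen_rel[OF F_genI1[OF m(1) g(1) w']])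
  have 2: "((m \<circ> g, w'), (m', w')) \<in> F_rel (sep_words X act) (word_act act)"
    by (rule F_gen_rel[OF F_genI2[OF mg m(2) w' fU sU agree]])
  show ?thesis using F_rel_trans[OF 1 2] ww by simp
qed

lemma surj_core:
  "L \<in> lists (F_carrier X act) \<Longrightarrow> \<exists>p\<in>Sb \<times> sep_words X act. phi X act p = L"
proof (induction L rule: rev_induct)
  case Nil
  have "(id, []) \<in> Sb \<times> sep_words X act" using Sb_id sep_words.Nil by blast
  moreover have "phi X act (id, []) = []" unfolding phi_def by simp
  ultimately show ?case by blast
next
  case (snoc c L0)
  have L0: "L0 \<in> lists (F_carrier X act)" and c: "c \<in> F_carrier X act" using snoc.prems by auto
  obtain p where p: "p \<in> Sb \<times> sep_words X act" "phi X act p = L0" using snoc.IH[OF L0] by blast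
  obtain m w where mw: "p = (m, w)" by (cases p)
  have m: "m \<in> Sb" and w: "w \<in> sep_words X act" using p(1) mw by auto
  obtain q where q: "q \<in> Sb \<times> X" "c = F_rel X act `` {q}" using carrierE[OF c] by blast
  obtain m1 x1 where mx1: "q = (m1, x1)" by (cases q)
  have m1: "m1 \<in> Sb" and x1: "x1 \<in> X" using q(1) mx1 by auto
  have wX: "set w \<subseteq> X" using W_X[OF w] .
  obtain U where U: "finite U" "supports Perm (word_act act) U w" using wsupp_ex[OF wX] by blast
  obtain C1 where C1: "finite C1" "supports Perm act C1 x1" using has_supp[OF x1] by blast
  obtain N where N: "\<forall>u\<in>U. u < N" using finite_nat_set_iff_bounded U(1) by auto
  have "inj_on (\<lambda>a. a + N) C1" by (simp add: inj_on_def)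
  then obtain g where g: "g \<in> Perm" "\<forall>a\<in>C1. g a = a + N" using Perm_extend[OF C1(1)] by blast
  have disj: "g ` C1 \<inter> U = {}"
  proof -
    have "\<forall>a\<in>C1. g a \<notin> U" using g(2) N by fastforce
    then show ?thesis by blast
  qed
  define m' where "m' a = (if a \<in> g ` C1 then m1 (inv g a) else m a)" for a
  have "{a. m' a \<noteq> a} \<subseteq> g ` C1 \<union> {a. m a \<noteq> a}" unfolding m'_def by auto
  moreover have "finite (g ` C1 \<union> {a. m a \<noteq> a})" using C1(1) m unfolding Sb_def by simp
  ultimately have m': "m' \<in> Sb" unfolding Sb_def by (simp add: finite_subset)
  define x' where "x' = act g x1"
  have x': "x' \<in> X" unfolding x'_def using act_closed[OF g(1) x1] .
  have sx': "supports Perm act (g ` C1) x'" unfolding x'_def using supp_image[OF C1(2) x1 g(1)] .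
  have sep: "separated Perm (word_act act) act w x'"
    unfolding separated_def using U sx' C1(1) disj by blast
  have w'': "w @ [x'] \<in> sep_words X act" using sep_words.snoc[OF w x' sep] .
  have agU: "\<forall>a\<in>U. m' a = m a" unfolding m'_def using disj by auto
  have eq1: "map (\<lambda>x. F_rel X act `` {(m', x)}) w = map (\<lambda>x. F_rel X act `` {(m, x)}) w"
  proof (rule map_cong[OF refl])
    fix x assume x: "x \<in> set w"
    then have xX: "x \<in> X" using wX by blast
    have sx: "supports Perm act U x" using wsupp_elem[OF U(2) x] .
    show "F_rel X act `` {(m', x)} = F_rel X act `` {(m, x)}"
      by (rule cls_eq[OF F_gen_rel[OF F_genI2[OF m' m xX U(1) sx agU]]])
  qed
  have ag1: "\<forall>a\<in>C1. (m' \<circ> g) a = m1 a"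
    unfolding m'_def using Perm_inv_cancel(2)[OF g(1)] by auto
  have m'g: "m' \<circ> g \<in> Sb" using Sb_comp[OF m' Perm_Sb[OF g(1)]] .
  have "F_rel X act `` {(m', x')} = F_rel X act `` {(m' \<circ> g, x1)}"
    unfolding x'_def by (rule cls_eq[OF F_gen_rel[OF F_genI1[OF m' g(1) x1]]])
  also have "\<dots> = F_rel X act `` {(m1, x1)}"
    by (rule cls_eq[OF F_gen_rel[OF F_genI2[OF m'g m1 x1 C1(1) C1(2) ag1]]])
  finally have eq2: "F_rel X act `` {(m', x')} = c" using q(2) mx1 by simp
  have L0e: "L0 = map (\<lambda>x. F_rel X act `` {(m, x)}) w" using p(2) mw unfolding phi_def by simp
  have "phi X act (m', w @ [x']) = map (\<lambda>x. F_rel X act `` {(m', x)}) w @ [F_rel X act `` {(m', x')}]"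
    unfolding phi_def by simp
  then have "phi X act (m', w @ [x']) = L0 @ [c]"
    unfolding eq1 eq2 L0e .
  moreover have "(m', w @ [x']) \<in> Sb \<times> sep_words X act" using m' w'' by simp
  ultimately show ?case by blast
qed

end

theorem mainTheorem7:
  fixes X :: "'x set" and act :: "(nat \<Rightarrow> nat) \<Rightarrow> 'x \<Rightarrow> 'x"
  assumes "nominal_set Perm X act"
  shows "\<exists>f. nom_iso Sb
           (F_carrier (sep_words X act) (word_act act))
           (F_act (sep_words X act) (word_act act))
           (lists (F_carrier X act))
           (word_act (F_act X act))
           f"
proof -
  note nom = assms
  have inj: "inj_on (fmap X act) (F_carrier (sep_words X act) (word_act act))"
  proof (rule inj_onI)
    fix c1 c2 assume c1: "c1 \<in> F_carrier (sep_words X act) (word_act act)"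
      and c2: "c2 \<in> F_carrier (sep_words X act) (word_act act)" and eq: "fmap X act c1 = fmap X act c2"
    obtain p1 where p1: "p1 \<in> Sb \<times> sep_words X act" "c1 = F_rel (sep_words X act) (word_act act) `` {p1}"
      using carrierE[OF c1] by blast
    obtain p2 where p2: "p2 \<in> Sb \<times> sep_words X act" "c2 = F_rel (sep_words X act) (word_act act) `` {p2}"
      using carrierE[OF c2] by blast
    obtain m w where mw: "p1 = (m, w)" by (cases p1)
    obtain m' w' where mw': "p2 = (m', w')" by (cases p2)
    have m: "m \<in> Sb" "m' \<in> Sb" and w: "w \<in> sep_words X act" "w' \<in> sep_words X act"
      using p1(1) p2(1) mw mw' by auto
    have "phi X act p1 = phi X act p2"
      using eq fmap_cls[OF nom p1(1)] fmap_cls[OF nom p2(1)] p1(2) p2(2) by simp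
    then have PE: "map (\<lambda>x. F_rel X act `` {(m, x)}) w = map (\<lambda>x. F_rel X act `` {(m', x)}) w'"
      unfolding phi_def mw mw' by simp
    then have len: "length w = length w'" by (metis length_map)
    have R: "\<forall>i<length w. Rel X act (m, w ! i) (m', w' ! i)"
    proof (intro allI impI)
      fix i assume i: "i < length w"
      have "map (\<lambda>x. F_rel X act `` {(m, x)}) w ! i = map (\<lambda>x. F_rel X act `` {(m', x)}) w' ! i"
        using PE by simp
      then have "F_rel X act `` {(m, w ! i)} = F_rel X act `` {(m', w' ! i)}" using i len by simp
      then have rel: "((m, w ! i), (m', w' ! i)) \<in> F_rel X act" by (rule cls_eqD)
      have "w ! i \<in> X" using W_X[OF nom w(1)] i nth_mem by blast
      then have "(m, w ! i) \<in> Sb \<times> X" using m by simp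
      then show "Rel X act (m, w ! i) (m', w' ! i)" using F_rel_Rel[OF nom rel] by blast
    qed
    have "((m, w), (m', w')) \<in> F_rel (sep_words X act) (word_act act)"
      using inj_core[OF nom w(1) w(2) len m(1) m(2) R] .
    then show "c1 = c2" using p1(2) p2(2) mw mw' cls_eq by metis
  qed
  have img: "fmap X act ` F_carrier (sep_words X act) (word_act act) = lists (F_carrier X act)"
  proof
    show "fmap X act ` F_carrier (sep_words X act) (word_act act) \<subseteq> lists (F_carrier X act)"
    proof
      fix L assume "L \<in> fmap X act ` F_carrier (sep_words X act) (word_act act)"
      then obtain c where c: "c \<in> F_carrier (sep_words X act) (word_act act)" "L = fmap X act c" by blast
      obtain p where p: "p \<in> Sb \<times> sep_words X act" "c = F_rel (sep_words X act) (word_act act) `` {p}"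
        using carrierE[OF c(1)] by blast
      have L: "L = phi X act p" using c(2) p fmap_cls[OF nom p(1)] by simp
      have "\<forall>x\<in>set (snd p). F_rel X act `` {(fst p, x)} \<in> F_carrier X act"
      proof
        fix x assume "x \<in> set (snd p)"
        then have "x \<in> X" using W_X[OF nom] p(1) by (cases p) auto
        then have "(fst p, x) \<in> Sb \<times> X" using p(1) by (cases p) auto
        then show "F_rel X act `` {(fst p, x)} \<in> F_carrier X act" by (rule carrierI)
      qed
      then show "L \<in> lists (F_carrier X act)" unfolding L phi_def by auto
    qed
  next
    show "lists (F_carrier X act) \<subseteq> fmap X act ` F_carrier (sep_words X act) (word_act act)"
    proof
      fix L assume "L \<in> lists (F_carrier X act)"
      then obtain p where p: "p \<in> Sb \<times> sep_words X act" "phi X act p = L"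
        using surj_core[OF nom] by blast
      have "F_rel (sep_words X act) (word_act act) `` {p} \<in> F_carrier (sep_words X act) (word_act act)"
        using carrierI[OF p(1)] .
      moreover have "fmap X act (F_rel (sep_words X act) (word_act act) `` {p}) = L"
        using fmap_cls[OF nom p(1)] p(2) by simp
      ultimately show "L \<in> fmap X act ` F_carrier (sep_words X act) (word_act act)" by (metis imageI)
    qed
  qed
  have equiv: "\<forall>n\<in>Sb. \<forall>c\<in>F_carrier (sep_words X act) (word_act act).
     fmap X act (F_act (sep_words X act) (word_act act) n c) = word_act (F_act X act) n (fmap X act c)"
  proof (intro ballI)
    fix n c assume n: "n \<in> Sb" and c: "c \<in> F_carrier (sep_words X act) (word_act act)"
    obtain p where p: "p \<in> Sb \<times> sep_words X act" "c = F_rel (sep_words X act) (word_act act) `` {p}"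
      using carrierE[OF c] by blast
    obtain m w where mw: "p = (m, w)" by (cases p)
    have m: "m \<in> Sb" and w: "w \<in> sep_words X act" using p(1) mw by auto
    have nm: "(n \<circ> m, w) \<in> Sb \<times> sep_words X act" using Sb_comp[OF n m] w by simp
    have "F_act (sep_words X act) (word_act act) n c = F_rel (sep_words X act) (word_act act) `` {(n \<circ> m, w)}"
      using F_act_cls[OF n] p(2) mw by simp
    then have "fmap X act (F_act (sep_words X act) (word_act act) n c) = phi X act (n \<circ> m, w)"
      using fmap_cls[OF nom nm] by simp
    also have "\<dots> = map (\<lambda>x. F_rel X act `` {(n \<circ> m, x)}) w" unfolding phi_def by simp
    also have "\<dots> = map (F_act X act n) (map (\<lambda>x. F_rel X act `` {(m, x)}) w)"
      by (simp add: F_act_cls[OF n])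
    also have "\<dots> = word_act (F_act X act) n (fmap X act c)"
      using fmap_cls[OF nom p(1)] p(2) mw unfolding word_act_def phi_def by simp
    finally show "fmap X act (F_act (sep_words X act) (word_act act) n c) = word_act (F_act X act) n (fmap X act c)" .
  qed
  show ?thesis unfolding nom_iso_def bij_betw_def using inj img equiv by blast
qed

end
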